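(* Let $G$ be a locally compact, Hausdorff, étale groupoid and $\alpha$ an automorphism of $G$. The following are equivalent: (1) $G^\infty_\alpha$ is principal; (2) $G$ is principal and, whenever $x \in G^{(0)}$ and $l\in\mathbb{Z}$ satisfy $[x] = [\alpha^l(x)]$, we have $l = 0$.
   Context: Let $E$ be the directed graph with one vertex $v$ and countably infinitely many edges $e_1,e_2,\dots$. Let $E^*$ be its finite paths (including $v$), $E^\infty$ its infinite paths, $P = E^*\sqcup E^\infty$, $|\mu|$ the length. $H_\infty$ is the groupoid $\{(\alpha x, |\alpha|-|\beta|, \beta x) : x\in P, \alpha,\beta\in E^*\}\subseteq P\times\mathbb{Z}\times P$ with $(x,m,y)(y,n,z)=(x,m+n,z)$, $(x,m,y)^{-1}=(y,-m,x)$, unit space identified with $P$, topology generated by the sets $Z((\alpha,\beta)\setminus F)=\{(\alpha x,|\alpha|-|\beta|,\beta x): x\in P, x\text{ does not begin with an edge in }F\}$ ($F$ finite); $c(x,m,y)=m$. An automorphism is a structure-preserving homeomorphism. $G^\infty_\alpha$ is $H_\infty\times G$ with product topology, unit space $H_\infty^{(0)}\times G^{(0)}$, $r(h,g)=(r(h),r(g))$, $s(h,g)=(s(h),\alpha^{c(h)}(s(g)))$, product $(h_1,g_1)(h_2,g_2)=(h_1h_2,g_1\alpha^{-c(h_1)}(g_2))$, inverse $(h,g)^{-1}=(h^{-1},\alpha^{c(h)}(g^{-1}))$. A groupoid is principal if $g\mapsto(r(g),s(g))$ is injective. For $u\in G^{(0)}$, $[u] = \{r(g) : s(g) = u\}$.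 *)

theory Defs
  imports "HOL-Analysis.Analysis"
begin

text \<open>A groupoid is given by its set of arrows G, range r, source s,
  a multiplication (meaningful on composable pairs, i.e. s g = r h) and an
  inverse. Units are the arrows u with r u = u.\<close>

definition composable :: "'a set \<Rightarrow> ('a \<Rightarrow> 'a) \<Rightarrow> ('a \<Rightarrow> 'a) \<Rightarrow> ('a \<times> 'a) set" where
  "composable G r s = {(g, h). g \<in> G \<and> h \<in> G \<and> s g = r h}"

definition groupoid ::
  "'a set \<Rightarrow> ('a \<Rightarrow> 'a) \<Rightarrow> ('a \<Rightarrow> 'a) \<Rightarrow> ('a \<Rightarrow> 'a \<Rightarrow> 'a) \<Rightarrow> ('a \<Rightarrow> 'a) \<Rightarrow> bool" where
  "groupoid G r s mul iv \<longleftrightarrow>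
     (\<forall>g\<in>G. r g \<in> G \<and> s g \<in> G \<and> iv g \<in> G) \<and>
     (\<forall>g\<in>G. r (r g) = r g \<and> s (r g) = r g \<and> r (s g) = s g \<and> s (s g) = s g) \<and>
     (\<forall>g\<in>G. \<forall>h\<in>G. s g = r h \<longrightarrow>
         mul g h \<in> G \<and> r (mul g h) = r g \<and> s (mul g h) = s h) \<and>
     (\<forall>g\<in>G. \<forall>h\<in>G. \<forall>k\<in>G. s g = r h \<and> s h = r k \<longrightarrow>
         mul (mul g h) k = mul g (mul h k)) \<and>
     (\<forall>g\<in>G. mul (r g) g = g \<and> mul g (s g) = g) \<and>
     (\<forall>g\<in>G. r (iv g) = s g \<and> s (iv g) = r g \<and>
         mul g (iv g) = r g \<and> mul (iv g) g = s g)"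

definition unit_space :: "'a set \<Rightarrow> ('a \<Rightarrow> 'a) \<Rightarrow> 'a set" where
  "unit_space G r = {u \<in> G. r u = u}"

definition topological_groupoid ::
  "'a set \<Rightarrow> 'a topology \<Rightarrow> ('a \<Rightarrow> 'a) \<Rightarrow> ('a \<Rightarrow> 'a) \<Rightarrow> ('a \<Rightarrow> 'a \<Rightarrow> 'a) \<Rightarrow> ('a \<Rightarrow> 'a) \<Rightarrow> bool" where
  "topological_groupoid G T r s mul iv \<longleftrightarrow>
     groupoid G r s mul iv \<and> topspace T = G \<and>
     continuous_map (subtopology (prod_topology T T) (composable G r s)) T (\<lambda>(g, h). mul g h) \<and>
     continuous_map T T iv"

definition etale_groupoid ::
  "'a set \<Rightarrow> 'a topology \<Rightarrow> ('a \<Rightarrow> 'a) \<Rightarrow> ('a \<Rightarrow> 'a) \<Rightarrow> ('a \<Rightarrow> 'a \<Rightarrow> 'a) \<Rightarrow> ('a \<Rightarrow> 'a) \<Rightarrow> bool" where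
  "etale_groupoid G T r s mul iv \<longleftrightarrow>
     topological_groupoid G T r s mul iv \<and>
     (\<forall>g\<in>G. \<exists>U. openin T U \<and> g \<in> U \<and>
        openin (subtopology T (unit_space G r)) (r ` U) \<and>
        homeomorphic_map (subtopology T U) (subtopology T (r ` U)) r)"

definition groupoid_automorphism ::
  "'a set \<Rightarrow> 'a topology \<Rightarrow> ('a \<Rightarrow> 'a) \<Rightarrow> ('a \<Rightarrow> 'a) \<Rightarrow> ('a \<Rightarrow> 'a \<Rightarrow> 'a) \<Rightarrow> ('a \<Rightarrow> 'a) \<Rightarrow> ('a \<Rightarrow> 'a) \<Rightarrow> bool" where
  "groupoid_automorphism G T r s mul iv \<alpha> \<longleftrightarrow>
     bij_betw \<alpha> G G \<and> homeomorphic_map T T \<alpha> \<and>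
     (\<forall>g\<in>G. \<alpha> (r g) = r (\<alpha> g) \<and> \<alpha> (s g) = s (\<alpha> g) \<and> \<alpha> (iv g) = iv (\<alpha> g)) \<and>
     (\<forall>g\<in>G. \<forall>h\<in>G. s g = r h \<longrightarrow> \<alpha> (mul g h) = mul (\<alpha> g) (\<alpha> h))"

definition apow :: "'a set \<Rightarrow> ('a \<Rightarrow> 'a) \<Rightarrow> int \<Rightarrow> 'a \<Rightarrow> 'a" where
  "apow G \<alpha> l = (if 0 \<le> l then \<alpha> ^^ nat l else (inv_into G \<alpha>) ^^ nat (- l))"

definition is_principal :: "'b set \<Rightarrow> ('b \<Rightarrow> 'c) \<Rightarrow> ('b \<Rightarrow> 'c) \<Rightarrow> bool" where
  "is_principal G r s \<longleftrightarrow> inj_on (\<lambda>g. (r g, s g)) G"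

definition gorbit :: "'a set \<Rightarrow> ('a \<Rightarrow> 'a) \<Rightarrow> ('a \<Rightarrow> 'a) \<Rightarrow> 'a \<Rightarrow> 'a set" where
  "gorbit G r s u = {r g | g. g \<in> G \<and> s g = u}"

section \<open>The path groupoid H_\<infinity> of the graph with one vertex and edges e_0, e_1, ...\<close>

text \<open>Edge e_(n+1) is encoded as the natural number n. Finite paths are lists
  of edges (the empty list is the vertex v), infinite paths are sequences.\<close>

datatype path = Fin "nat list" | Inf "nat \<Rightarrow> nat"

fun cat :: "nat list \<Rightarrow> path \<Rightarrow> path" where
  "cat a (Fin b) = Fin (a @ b)"
| "cat a (Inf f) = Inf (\<lambda>n. if n < length a then a ! n else f (n - length a))"

definition Hinf :: "(path \<times> int \<times> path) set" where
  "Hinf = {(cat a x, int (length a) - int (length b), cat b x) | a b x. True}"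

definition Hr :: "path \<times> int \<times> path \<Rightarrow> path" where
  "Hr h = fst h"

definition Hs :: "path \<times> int \<times> path \<Rightarrow> path" where
  "Hs h = snd (snd h)"

definition Hc :: "path \<times> int \<times> path \<Rightarrow> int" where
  "Hc h = fst (snd h)"

definition Ginf :: "'a set \<Rightarrow> ((path \<times> int \<times> path) \<times> 'a) set" where
  "Ginf G = Hinf \<times> G"

definition Ginf_r :: "('a \<Rightarrow> 'a) \<Rightarrow> (path \<times> int \<times> path) \<times> 'a \<Rightarrow> path \<times> 'a" where
  "Ginf_r r hg = (Hr (fst hg), r (snd hg))"

definition Ginf_s :: "'a set \<Rightarrow> ('a \<Rightarrow> 'a) \<Rightarrow> ('a \<Rightarrow> 'a) \<Rightarrow> (path \<times> int \<times> path) \<times> 'a \<Rightarrow> path \<times> 'a" where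
  "Ginf_s G s \<alpha> hg = (Hs (fst hg), apow G \<alpha> (Hc (fst hg)) (s (snd hg)))"

definition Ginf_mult :: "'a set \<Rightarrow> ('a \<Rightarrow> 'a \<Rightarrow> 'a) \<Rightarrow> ('a \<Rightarrow> 'a) \<Rightarrow>
    (path \<times> int \<times> path) \<times> 'a \<Rightarrow> (path \<times> int \<times> path) \<times> 'a \<Rightarrow> (path \<times> int \<times> path) \<times> 'a" where
  "Ginf_mult G mul \<alpha> hg1 hg2 =
     (case (hg1, hg2) of (((x, m, y), g1), ((y', n, z), g2)) \<Rightarrow>
        ((x, m + n, z), mul g1 (apow G \<alpha> (- m) g2)))"

definition Ginf_inv :: "'a set \<Rightarrow> ('a \<Rightarrow> 'a) \<Rightarrow> ('a \<Rightarrow> 'a) \<Rightarrow>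
    (path \<times> int \<times> path) \<times> 'a \<Rightarrow> (path \<times> int \<times> path) \<times> 'a" where
  "Ginf_inv G iv \<alpha> hg =
     (case hg of ((x, m, y), g) \<Rightarrow> ((y, - m, x), apow G \<alpha> m (iv g)))"

end

theory Submission
  imports Defs
begin

locale bijG =
  fixes G :: "'a set" and \<alpha> :: "'a \<Rightarrow> 'a"
  assumes bij: "bij_betw \<alpha> G G"
begin

lemma a_in: "x \<in> G \<Longrightarrow> \<alpha> x \<in> G" using bij by (auto simp: bij_betw_def)
lemma b_in: "x \<in> G \<Longrightarrow> inv_into G \<alpha> x \<in> G"
  using bij by (metis bij_betw_def inv_into_into)
lemma ab: "x \<in> G \<Longrightarrow> \<alpha> (inv_into G \<alpha> x) = x" using bij bij_betw_inv_into_right by metis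
lemma ba: "x \<in> G \<Longrightarrow> inv_into G \<alpha> (\<alpha> x) = x" using bij bij_betw_inv_into_left by metis

lemma apow0[simp]: "apow G \<alpha> 0 x = x" by (simp add: apow_def)

lemma apow_in_nat: "x \<in> G \<Longrightarrow> (\<alpha> ^^ n) x \<in> G \<and> (inv_into G \<alpha> ^^ n) x \<in> G"
  by (induction n) (auto simp: a_in b_in)

lemma apow_in: "x \<in> G \<Longrightarrow> apow G \<alpha> l x \<in> G"
  by (simp add: apow_def apow_in_nat)

lemma apow_up: assumes "x \<in> G" shows "apow G \<alpha> (l+1) x = \<alpha> (apow G \<alpha> l x)"
proof (cases "l \<ge> 0")
  case True
  then have "nat (l+1) = Suc (nat l)" by simp
  then show ?thesis using True by (simp add: apow_def)
next
  case False
  show ?thesis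
  proof (cases "l = -1")
    case True then show ?thesis using assms by (simp add: apow_def ab)
  next
    case F2: False
    then have "nat (-l) = Suc (nat (-(l+1)))" using False by simp
    then show ?thesis using False F2 assms by (simp add: apow_def ab apow_in_nat)
  qed
qed

lemma apow_down: assumes "x \<in> G" shows "apow G \<alpha> (l-1) x = inv_into G \<alpha> (apow G \<alpha> l x)"
  using apow_up[OF assms, of "l-1"] ba apow_in assms by simp

lemma apow_add: assumes "x \<in> G" shows "apow G \<alpha> (a+b) x = apow G \<alpha> a (apow G \<alpha> b x)"
proof (induction a rule: int_induct[where k=0])
  case base then show ?case by simp
next
  case (step1 i)
  have "apow G \<alpha> (i+1+b) x = apow G \<alpha> ((i+b)+1) x" by (simp add: algebra_simps)
  also have "\<dots> = \<alpha> (apow G \<alpha> (i+b) x)" using apow_up assms by blast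
  also have "\<dots> = apow G \<alpha> (i+1) (apow G \<alpha> b x)" using step1 apow_up apow_in assms by simp
  finally show ?case .
next
  case (step2 i)
  have "apow G \<alpha> (i-1+b) x = apow G \<alpha> ((i+b)-1) x" by (simp add: algebra_simps)
  also have "\<dots> = inv_into G \<alpha> (apow G \<alpha> (i+b) x)" using apow_down assms by blast
  also have "\<dots> = apow G \<alpha> (i-1) (apow G \<alpha> b x)" using step2 apow_down apow_in assms by simp
  finally show ?case .
qed

end

lemma gorbit_rs:
  assumes gr: "groupoid G r s mul iv" and g: "g \<in> G"
  shows "gorbit G r s (r g) = gorbit G r s (s g)"
proof -
  have key: "gorbit G r s (s k) \<subseteq> gorbit G r s (r k)" if k: "k \<in> G" for k
  proof
    fix z assume "z \<in> gorbit G r s (s k)"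
    then obtain h where h: "h \<in> G" "s h = s k" "z = r h" by (auto simp: gorbit_def)
    have "iv k \<in> G" "r (iv k) = s k" "s (iv k) = r k" using gr k by (auto simp: groupoid_def)
    then have "mul h (iv k) \<in> G \<and> r (mul h (iv k)) = r h \<and> s (mul h (iv k)) = r k"
      using gr h unfolding groupoid_def by metis
    then have "z = r (mul h (iv k)) \<and> mul h (iv k) \<in> G \<and> s (mul h (iv k)) = r k" using h by simp
    then show "z \<in> gorbit G r s (r k)" unfolding gorbit_def by blast
  qed
  have "iv g \<in> G" "r (iv g) = s g" "s (iv g) = r g" using gr g by (auto simp: groupoid_def)
  then show ?thesis using key[OF g] key[of "iv g"] by auto
qed

theorem proposition5p1:
  fixes G :: "'a set" and T :: "'a topology"
    and r s :: "'a \<Rightarrow> 'a" and mul :: "'a \<Rightarrow> 'a \<Rightarrow> 'a" and iv :: "'a \<Rightarrow> 'a"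
    and \<alpha> :: "'a \<Rightarrow> 'a"
  assumes "etale_groupoid G T r s mul iv"
    and "locally_compact_space T"
    and "Hausdorff_space T"
    and "groupoid_automorphism G T r s mul iv \<alpha>"
  shows "is_principal (Ginf G) (Ginf_r r) (Ginf_s G s \<alpha>) \<longleftrightarrow>
         (is_principal G r s \<and>
          (\<forall>x \<in> unit_space G r. \<forall>l :: int.
              gorbit G r s x = gorbit G r s (apow G \<alpha> l x) \<longrightarrow> l = 0))"
proof -
  have gr: "groupoid G r s mul iv" using assms(1)
    by (simp add: etale_groupoid_def topological_groupoid_def)
  interpret bijG G \<alpha> using assms(4) by (unfold_locales) (simp add: groupoid_automorphism_def)
  have sG: "s g \<in> G" "r g \<in> G" if "g \<in> G" for g using gr that by (auto simp: groupoid_def)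
  define z where "z = Inf (\<lambda>_. 0)"
  have catz: "cat (replicate k 0) z = z" for k unfolding z_def by (auto intro!: ext)
  have zH: "(z, l, z) \<in> Hinf" for l
  proof (cases "l \<ge> 0")
    case True
    have "(z, l, z) = (cat (replicate (nat l) 0) z, int (length (replicate (nat l) 0)) - int (length ([]::nat list)), cat [] z)"
      using True by (simp add: catz catz[of 0, simplified])
    then show ?thesis unfolding Hinf_def by blast
  next
    case False
    have "(z, l, z) = (cat [] z, int (length ([]::nat list)) - int (length (replicate (nat (-l)) 0)), cat (replicate (nat (-l)) 0) z)"
      using False by (simp add: catz catz[of 0, simplified])
    then show ?thesis unfolding Hinf_def by blast
  qed
  show ?thesis
  proof
    assume P: "is_principal (Ginf G) (Ginf_r r) (Ginf_s G s \<alpha>)"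
    have "is_principal G r s" unfolding is_principal_def
    proof (rule inj_onI)
      fix g g' assume "g \<in> G" "g' \<in> G" "(r g, s g) = (r g', s g')"
      moreover have "((z,0,z),g) \<in> Ginf G" "((z,0,z),g') \<in> Ginf G"
        using zH[of 0] \<open>g \<in> G\<close> \<open>g' \<in> G\<close> by (auto simp: Ginf_def)
      moreover have "(Ginf_r r ((z,0,z),g), Ginf_s G s \<alpha> ((z,0,z),g)) = (Ginf_r r ((z,0,z),g'), Ginf_s G s \<alpha> ((z,0,z),g'))"
        using \<open>(r g, s g) = (r g', s g')\<close> by (simp add: Ginf_r_def Ginf_s_def Hr_def Hs_def Hc_def)
      ultimately have "((z,0,z),g) = ((z,0,z),g')"
        using inj_onD[OF P[unfolded is_principal_def]] by blast
      then show "g = g'" by simp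
    qed
    moreover have "l = 0" if x: "x \<in> unit_space G r" and eq: "gorbit G r s x = gorbit G r s (apow G \<alpha> l x)" for x l
    proof -
      have xG: "x \<in> G" "r x = x" using x by (auto simp: unit_space_def)
      have sx: "s x = x" using gr xG unfolding groupoid_def by metis
      have "x \<in> gorbit G r s x" using xG sx unfolding gorbit_def by (metis (mono_tags, lifting) mem_Collect_eq)
      then have "x \<in> gorbit G r s (apow G \<alpha> l x)" using eq by simp
      then obtain g where g: "g \<in> G" "r g = x" "s g = apow G \<alpha> l x" unfolding gorbit_def by blast
      have "apow G \<alpha> (-l) (s g) = x" using g apow_add[OF xG(1), of "-l" l] by simp
      moreover have "((z,-l,z),g) \<in> Ginf G" "((z,0,z),x) \<in> Ginf G"
        using zH[of 0] zH[of "-l"] g xG by (auto simp: Ginf_def)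
      moreover have "(Ginf_r r ((z,-l,z),g), Ginf_s G s \<alpha> ((z,-l,z),g)) = (Ginf_r r ((z,0,z),x), Ginf_s G s \<alpha> ((z,0,z),x))"
        using g xG sx \<open>apow G \<alpha> (-l) (s g) = x\<close> by (simp add: Ginf_r_def Ginf_s_def Hr_def Hs_def Hc_def)
      ultimately have "((z,-l,z),g) = ((z,0,z),x)"
        using inj_onD[OF P[unfolded is_principal_def]] by blast
      then show "l = 0" by simp
    qed
    ultimately show "is_principal G r s \<and>
          (\<forall>x \<in> unit_space G r. \<forall>l :: int.
              gorbit G r s x = gorbit G r s (apow G \<alpha> l x) \<longrightarrow> l = 0)" by blast
  next
    assume R: "is_principal G r s \<and>
          (\<forall>x \<in> unit_space G r. \<forall>l :: int.
              gorbit G r s x = gorbit G r s (apow G \<alpha> l x) \<longrightarrow> l = 0)"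
    show "is_principal (Ginf G) (Ginf_r r) (Ginf_s G s \<alpha>)" unfolding is_principal_def
    proof (rule inj_onI)
      fix p q assume p: "p \<in> Ginf G" and q: "q \<in> Ginf G"
        and e: "(Ginf_r r p, Ginf_s G s \<alpha> p) = (Ginf_r r q, Ginf_s G s \<alpha> q)"
      obtain x m y g where pd: "p = ((x,m,y),g)" by (metis prod.exhaust)
      obtain x' m' y' g' where qd: "q = ((x',m',y'),g')" by (metis prod.exhaust)
      have gG: "g \<in> G" "g' \<in> G" using p q pd qd by (auto simp: Ginf_def)
      have e1: "x = x'" "y = y'" "r g = r g'" "apow G \<alpha> m (s g) = apow G \<alpha> m' (s g')"
        using e pd qd by (auto simp: Ginf_r_def Ginf_s_def Hr_def Hs_def Hc_def)
      let ?u = "s g" and ?u' = "s g'"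
      have uG: "?u \<in> G" "?u' \<in> G" using sG gG by auto
      have uunit: "?u \<in> unit_space G r" using gr gG unfolding unit_space_def groupoid_def by auto
      have u': "?u' = apow G \<alpha> (m - m') ?u"
      proof -
        have "?u' = apow G \<alpha> (-m' + m') ?u'" by simp
        also have "\<dots> = apow G \<alpha> (-m') (apow G \<alpha> m ?u)" using apow_add[OF uG(2), of "-m'" m'] e1(4) by simp
        also have "\<dots> = apow G \<alpha> (-m' + m) ?u" using apow_add[OF uG(1), of "-m'" m] by simp
        finally show ?thesis by simp
      qed
      have "gorbit G r s ?u = gorbit G r s ?u'"
        using gorbit_rs[OF gr gG(1)] gorbit_rs[OF gr gG(2)] e1 by simp
      then have "m - m' = 0" using R uunit u' by metis
      then have mm: "m = m'" by simp
      then have "?u' = ?u" using u' by simp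
      then have "g = g'" using R gG e1 unfolding is_principal_def inj_on_def by auto
      then show "p = q" using pd qd mm e1 by simp
    qed
  qed
qed

end
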